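(* In the setting where $M$ has $3$ edges, $p,q\in(0,1]$, $(\omega_e)_{e\in E_\varGamma}$ and $(\omega_{e,j,g})$ are mutually independent Bernoulli variables with means $p$ and $q$ respectively, and $$\widehat C_M=\frac{1}{3pq}\sum_{e\in E_\varGamma}\sum_{j=1}^{3}\sum_{g\in E_j(e)}\omega_e\,\omega_{e,j,g}\,\eta(W_{e,j,g}),$$ for every $\varepsilon>0$ (assuming $C_M>0$) we have $\Pr\big[|\widehat C_M-C_M|\ge\varepsilon C_M\big]\le\frac{1-pq}{pq\,\varepsilon^2}$.
   Context: A temporal graph $\varGamma=(V_\varGamma,E_\varGamma)$ consists of a finite vertex set $V_\varGamma$ and a finite sequence $E_\varGamma$ of $m$ temporal edges $(u,v,t)$, $u,v\in V_\varGamma$, $t\in\mathbb{R}^+$, with distinct timestamps. A temporal motif $M$ is an ordered sequence of $l$ directed edges $\langle e'_1=(u'_1,v'_1),\dots,e'_l=(u'_l,v'_l)\rangle$ on a vertex set $V_M$ whose underlying graph is connected; here $l=3$ (and $|V_M|=3$). Fix $\delta\ge0$. A sequence $\langle (w_1,x_1,t_1),\dots,(w_l,x_l,t_l)\rangle$ of edges of $E_\varGamma$ with $t_1<\dots<t_l$ is a $\delta$-instance of $M$ if there is a bijection $f$ from its vertices to $V_M$ with $f(w_i)=u'_i$, $f(x_i)=v'_i$ for all $i$, and $t_l-t_1\le\delta$. $C_M$ is the number of $\delta$-instances of $M$ in $\varGamma$; $\eta_j(e)$ is the number of $\delta$-instances of $M$ whose $j$-th edge is $e$. Wedge data: for each $e\in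 E_\varGamma$ and $j\in\{1,2,3\}$ there is a finite set $E_j(e)\subseteq E_\varGamma$ and for each $g\in E_j(e)$ a nonnegative integer $\eta(W_{e,j,g})$ (the number of $\delta$-instances of $M$ containing the temporal wedge formed by $e$ and $g$, with $e$ mapped to $e'_j$), such that $\sum_{g\in E_j(e)}\eta(W_{e,j,g})=\eta_j(e)$. *)

theory Defs
  imports "HOL-Probability.Probability"
begin

text \<open>Temporal graph: a finite list of temporal edges (u, v, t), indexed 0..m-1.
  Temporal edges are identified with their indices (timestamps are distinct).\<close>

type_synonym 'v tedge = "'v \<times> 'v \<times> real"

definition src :: "'v tedge \<Rightarrow> 'v" where "src e = fst e"
definition dst :: "'v tedge \<Rightarrow> 'v" where "dst e = fst (snd e)"
definition tstamp :: "'v tedge \<Rightarrow> real" where "tstamp e = snd (snd e)"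

definition temporal_graph :: "'v tedge list \<Rightarrow> bool" where
  "temporal_graph G \<longleftrightarrow> distinct (map tstamp G) \<and> (\<forall>e\<in>set G. tstamp e > 0)"

text \<open>Motif: list of directed edges e'_1, ..., e'_l (e'_j = Mo ! (j-1)).\<close>

definition motif_verts :: "('m \<times> 'm) list \<Rightarrow> 'm set" where
  "motif_verts Mo = fst ` set Mo \<union> snd ` set Mo"

definition motif_adj :: "('m \<times> 'm) list \<Rightarrow> 'm \<Rightarrow> 'm \<Rightarrow> bool" where
  "motif_adj Mo a b \<longleftrightarrow> (a, b) \<in> set Mo \<or> (b, a) \<in> set Mo"

definition motif_connected :: "('m \<times> 'm) list \<Rightarrow> bool" where
  "motif_connected Mo \<longleftrightarrow>
     (\<forall>a\<in>motif_verts Mo. \<forall>b\<in>motif_verts Mo. (motif_adj Mo)\<^sup>*\<^sup>* a b)"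

definition is_motif :: "nat \<Rightarrow> ('m \<times> 'm) list \<Rightarrow> bool" where
  "is_motif l Mo \<longleftrightarrow> length Mo = l \<and> motif_connected Mo"

definition inst_verts :: "'v tedge list \<Rightarrow> nat list \<Rightarrow> 'v set" where
  "inst_verts G is = (\<lambda>i. src (G ! i)) ` set is \<union> (\<lambda>i. dst (G ! i)) ` set is"

definition is_delta_instance ::
  "'v tedge list \<Rightarrow> ('m \<times> 'm) list \<Rightarrow> real \<Rightarrow> nat list \<Rightarrow> bool" where
  "is_delta_instance G Mo \<delta> is \<longleftrightarrow>
     length is = length Mo \<and> length is > 0 \<and>
     (\<forall>i\<in>set is. i < length G) \<and>
     (\<forall>k. Suc k < length is \<longrightarrow> tstamp (G ! (is ! k)) < tstamp (G ! (is ! Suc k))) \<and>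
     (\<exists>f. bij_betw f (inst_verts G is) (motif_verts Mo) \<and>
          (\<forall>k < length is. f (src (G ! (is ! k))) = fst (Mo ! k) \<and>
                           f (dst (G ! (is ! k))) = snd (Mo ! k))) \<and>
     tstamp (G ! (is ! (length is - 1))) - tstamp (G ! (is ! 0)) \<le> \<delta>"

definition delta_instances :: "'v tedge list \<Rightarrow> ('m \<times> 'm) list \<Rightarrow> real \<Rightarrow> nat list set" where
  "delta_instances G Mo \<delta> = {is. is_delta_instance G Mo \<delta> is}"

definition motif_count :: "'v tedge list \<Rightarrow> ('m \<times> 'm) list \<Rightarrow> real \<Rightarrow> nat" where
  "motif_count G Mo \<delta> = card (delta_instances G Mo \<delta>)"

definition eta :: "'v tedge list \<Rightarrow> ('m \<times> 'm) list \<Rightarrow> real \<Rightarrow> nat \<Rightarrow> nat \<Rightarrow> nat" where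
  "eta G Mo \<delta> j e = card {is \<in> delta_instances G Mo \<delta>. is ! (j - 1) = e}"

definition C_hat ::
  "nat \<Rightarrow> real \<Rightarrow> real \<Rightarrow> (nat \<Rightarrow> nat \<Rightarrow> nat set) \<Rightarrow> (nat \<Rightarrow> nat \<Rightarrow> nat \<Rightarrow> nat)
   \<Rightarrow> (nat \<Rightarrow> 'w \<Rightarrow> bool) \<Rightarrow> (nat \<Rightarrow> nat \<Rightarrow> nat \<Rightarrow> 'w \<Rightarrow> bool) \<Rightarrow> 'w \<Rightarrow> real" where
  "C_hat m p q Ew etaW \<omega> \<omega>' x =
     1 / (3 * p * q) *
     (\<Sum>e<m. \<Sum>j\<in>{1..3}. \<Sum>g\<in>Ew e j.
        of_bool (\<omega> e x) * of_bool (\<omega>' e j g x) * real (etaW e j g))"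

definition sample_index :: "nat \<Rightarrow> (nat \<Rightarrow> nat \<Rightarrow> nat set) \<Rightarrow> (nat + nat \<times> nat \<times> nat) set" where
  "sample_index m Ew = Inl ` {..<m} \<union> {Inr (e, j, g) | e j g. e < m \<and> j \<in> {1..3} \<and> g \<in> Ew e j}"

definition sample_var ::
  "(nat \<Rightarrow> 'w \<Rightarrow> bool) \<Rightarrow> (nat \<Rightarrow> nat \<Rightarrow> nat \<Rightarrow> 'w \<Rightarrow> bool) \<Rightarrow> nat + nat \<times> nat \<times> nat \<Rightarrow> 'w \<Rightarrow> bool" where
  "sample_var \<omega> \<omega>' i = (case i of Inl e \<Rightarrow> \<omega> e | Inr (e, j, g) \<Rightarrow> \<omega>' e j g)"

end

theory Submission
  imports Defs
begin

lemma fin_D: "finite (delta_instances G Mo \<delta>)"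
proof -
  have "delta_instances G Mo \<delta> \<subseteq> {xs. set xs \<subseteq> {..<length G} \<and> length xs = length Mo}"
    by (auto simp: delta_instances_def is_delta_instance_def)
  moreover have "finite {xs. set xs \<subseteq> {..<length G} \<and> length xs = length Mo}"
    by (rule finite_lists_length_eq) simp
  ultimately show ?thesis by (rule finite_subset)
qed

lemma sum_eta:
  assumes "length Mo = 3" "j \<in> {1..3}"
  shows "(\<Sum>e<length G. eta G Mo \<delta> j e) = motif_count G Mo \<delta>"
proof -
  let ?D = "delta_instances G Mo \<delta>"
  have "?D = (\<Union>e\<in>{..<length G}. {is \<in> ?D. is ! (j - 1) = e})"
  proof safe
    fix xs assume "xs \<in> ?D"
    then have "xs ! (j-1) < length G" using assms
      by (auto simp: delta_instances_def is_delta_instance_def)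
    with \<open>xs \<in> ?D\<close> show "xs \<in> (\<Union>e\<in>{..<length G}. {is \<in> ?D. is ! (j - 1) = e})" by auto
  qed
  then have "card ?D = card (\<Union>e\<in>{..<length G}. {is \<in> ?D. is ! (j - 1) = e})" by simp
  also have "\<dots> = (\<Sum>e<length G. card {is \<in> ?D. is ! (j - 1) = e})"
    by (rule card_UN_disjoint) (auto simp: fin_D)
  finally show ?thesis by (simp add: motif_count_def eta_def)
qed


lemma (in prob_space) exp_ind:
  assumes "Measurable.pred M P"
  shows "expectation (\<lambda>x. of_bool (P x) :: real) = prob {x\<in>space M. P x}"
proof -
  have "expectation (\<lambda>x. of_bool (P x) :: real) = expectation (indicator {x\<in>space M. P x})"
    by (rule Bochner_Integration.integral_cong) (auto simp: indicator_def)
  also have "\<dots> = prob {x\<in>space M. P x}"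
    using assms by (simp add: pred_def)
  finally show ?thesis .
qed

lemma (in prob_space) exp_prod_two:
  assumes ind: "indep_vars (\<lambda>_. count_space UNIV) X I" and ab: "a \<in> I" "b \<in> I" "a \<noteq> b"
  shows "expectation (\<lambda>x. of_bool (X a x) * of_bool (X b x) :: real)
          = prob {x\<in>space M. X a x} * prob {x\<in>space M. X b x}"
proof -
  have i2: "indep_vars (\<lambda>_. count_space UNIV) X {a,b}"
    using indep_vars_subset[OF ind] ab by auto
  have rv: "\<And>i. i \<in> {a,b} \<Longrightarrow> Measurable.pred M (X i)"
    using i2 by (auto simp: indep_vars_def)
  have i3: "indep_vars (\<lambda>_. borel) (\<lambda>i x. of_bool (X i x) :: real) {a,b}"
    by (rule indep_vars_compose2[OF i2]) auto
  have "expectation (\<lambda>x. \<Prod>i\<in>{a,b}. of_bool (X i x) :: real) = (\<Prod>i\<in>{a,b}. expectation (\<lambda>x. of_bool (X i x) :: real))"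
    apply (rule indep_vars_lebesgue_integral[OF _ i3])
     apply simp
    apply (rule integrable_const_bound[where B=1])
     apply simp
    using rv by measurable
  moreover have "\<And>i. i \<in> {a,b} \<Longrightarrow> expectation (\<lambda>x. of_bool (X i x) :: real) = prob {x\<in>space M. X i x}"
    using rv exp_ind by blast
  ultimately show ?thesis using ab by simp
qed


theorem mainTheorem6:
  fixes G :: "'v tedge list" and Mo :: "('m \<times> 'm) list" and \<delta> :: real
    and Ew :: "nat \<Rightarrow> nat \<Rightarrow> nat set" and etaW :: "nat \<Rightarrow> nat \<Rightarrow> nat \<Rightarrow> nat"
    and M :: "'w measure" and p q \<epsilon> :: real
    and \<omega> :: "nat \<Rightarrow> 'w \<Rightarrow> bool" and \<omega>' :: "nat \<Rightarrow> nat \<Rightarrow> nat \<Rightarrow> 'w \<Rightarrow> bool"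
  assumes TG: "temporal_graph G"
    and Mot: "is_motif 3 Mo" and V3: "card (motif_verts Mo) = 3"
    and delta: "\<delta> \<ge> 0"
    and Ew_sub: "\<And>e j. e < length G \<Longrightarrow> j \<in> {1..3} \<Longrightarrow> Ew e j \<subseteq> {..<length G} \<and> finite (Ew e j)"
    and wedge_sum: "\<And>e j. e < length G \<Longrightarrow> j \<in> {1..3} \<Longrightarrow>
                      (\<Sum>g\<in>Ew e j. etaW e j g) = eta G Mo \<delta> j e"
    and P: "prob_space M"
    and pq: "0 < p" "p \<le> 1" "0 < q" "q \<le> 1"
    and indep: "prob_space.indep_vars M (\<lambda>_. count_space UNIV) (sample_var \<omega> \<omega>')
                  (sample_index (length G) Ew)"
    and bern_p: "\<And>e. e < length G \<Longrightarrow> measure M {x \<in> space M. \<omega> e x} = p"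
    and bern_q: "\<And>e j g. e < length G \<Longrightarrow> j \<in> {1..3} \<Longrightarrow> g \<in> Ew e j \<Longrightarrow>
                   measure M {x \<in> space M. \<omega>' e j g x} = q"
    and Cpos: "motif_count G Mo \<delta> > 0"
    and eps: "\<epsilon> > 0"
  shows "measure M {x \<in> space M.
            \<bar>C_hat (length G) p q Ew etaW \<omega> \<omega>' x - real (motif_count G Mo \<delta>)\<bar>
              \<ge> \<epsilon> * real (motif_count G Mo \<delta>)}
         \<le> (1 - p * q) / (p * q * \<epsilon>\<^sup>2)"
proof -
  interpret prob_space M by (rule P)
  define m where "m = length G"
  define C where "C = real (motif_count G Mo \<delta>)"
  define Y where "Y e j g x = (of_bool (\<omega> e x) * of_bool (\<omega>' e j g x) :: real)" for e j g x
  define A where "A = (\<Sum>e<m. \<Sum>j\<in>{1..3::nat}. \<Sum>g\<in>Ew e j. real (etaW e j g))"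
  define Z where "Z = C_hat (length G) p q Ew etaW \<omega> \<omega>'"
  have L3: "length Mo = 3" using Mot by (simp add: is_motif_def)
  have rvs: "\<And>i. i \<in> sample_index m Ew \<Longrightarrow> Measurable.pred M (sample_var \<omega> \<omega>' i)"
    using indep by (auto simp: indep_vars_def m_def)
  have pw: "\<And>e. e < m \<Longrightarrow> Measurable.pred M (\<omega> e)"
    using rvs[of "Inl e" for e] by (auto simp: sample_index_def sample_var_def)
  have pw': "\<And>e j g. e < m \<Longrightarrow> j \<in> {1..3} \<Longrightarrow> g \<in> Ew e j \<Longrightarrow> Measurable.pred M (\<omega>' e j g)"
  proof -
    fix e j g assume "e < m" "j \<in> {1..3::nat}" "g \<in> Ew e j"
    then have "Inr (e, j, g) \<in> sample_index m Ew" by (auto simp: sample_index_def)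
    from rvs[OF this] show "Measurable.pred M (\<omega>' e j g)" by (simp add: sample_var_def)
  qed
  have EY: "\<And>e j g. e < m \<Longrightarrow> j \<in> {1..3} \<Longrightarrow> g \<in> Ew e j \<Longrightarrow> expectation (Y e j g) = p * q"
  proof -
    fix e j g assume a: "e < m" "j \<in> {1..3::nat}" "g \<in> Ew e j"
    have "expectation (\<lambda>x. of_bool (sample_var \<omega> \<omega>' (Inl e) x) * of_bool (sample_var \<omega> \<omega>' (Inr (e,j,g)) x) :: real)
      = prob {x\<in>space M. sample_var \<omega> \<omega>' (Inl e) x} * prob {x\<in>space M. sample_var \<omega> \<omega>' (Inr (e,j,g)) x}"
      by (rule exp_prod_two[OF indep]) (use a in \<open>auto simp: sample_index_def m_def\<close>)
    then show "expectation (Y e j g) = p * q"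
      using a bern_p bern_q by (simp add: sample_var_def Y_def[abs_def] m_def)
  qed
  have IY: "\<And>e j g. e < m \<Longrightarrow> j \<in> {1..3} \<Longrightarrow> g \<in> Ew e j \<Longrightarrow> integrable M (Y e j g)"
  proof -
    fix e j g assume a: "e < m" "j \<in> {1..3::nat}" "g \<in> Ew e j"
    note [measurable] = pw[OF a(1)] pw'[OF a]
    show "integrable M (Y e j g)" unfolding Y_def[abs_def]
      by (rule integrable_const_bound[where B=1]) auto
  qed
  have Zeq: "\<And>x. Z x = (1 / (3 * p * q)) * (\<Sum>e<m. \<Sum>j\<in>{1..3}. \<Sum>g\<in>Ew e j. real (etaW e j g) * Y e j g x)"
    by (simp add: Z_def C_hat_def m_def Y_def mult.commute)
  have IZ: "integrable M Z"
    unfolding Zeq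
    apply (rule Bochner_Integration.integrable_mult_right)
    apply (rule Bochner_Integration.integrable_sum)
    apply (rule Bochner_Integration.integrable_sum)
    apply (rule Bochner_Integration.integrable_sum)
    apply (rule Bochner_Integration.integrable_mult_right)
    apply (rule IY)
    apply auto
    done
  have Asum: "A = 3 * C"
  proof -
    have "A = (\<Sum>e<m. \<Sum>j\<in>{1..3::nat}. real (eta G Mo \<delta> j e))"
      unfolding A_def
      by (intro sum.cong refl) (simp add: wedge_sum[symmetric] m_def)
    also have "\<dots> = (\<Sum>j\<in>{1..3::nat}. \<Sum>e<m. real (eta G Mo \<delta> j e))"
      by (rule sum.swap)
    also have "\<dots> = (\<Sum>j\<in>{1..3::nat}. C)"
      by (intro sum.cong refl) (simp add: C_def m_def flip: of_nat_sum sum_eta[OF L3])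
    finally show ?thesis by simp
  qed
  have EZ: "expectation Z = C"
  proof -
    have "expectation Z = (1 / (3 * p * q)) * (\<Sum>e<m. \<Sum>j\<in>{1..3}. \<Sum>g\<in>Ew e j. real (etaW e j g) * (p * q))"
    proof -
      have Ig: "\<And>e j. e < m \<Longrightarrow> j \<in> {1..3::nat} \<Longrightarrow> integrable M (\<lambda>x. \<Sum>g\<in>Ew e j. real (etaW e j g) * Y e j g x)"
        by (intro Bochner_Integration.integrable_sum Bochner_Integration.integrable_mult_right IY) auto
      have Ij: "\<And>e. e < m \<Longrightarrow> integrable M (\<lambda>x. \<Sum>j\<in>{1..3::nat}. \<Sum>g\<in>Ew e j. real (etaW e j g) * Y e j g x)"
        by (intro Bochner_Integration.integrable_sum Ig) auto
      have "expectation (\<lambda>x. \<Sum>e<m. \<Sum>j\<in>{1..3::nat}. \<Sum>g\<in>Ew e j. real (etaW e j g) * Y e j g x)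
         = (\<Sum>e<m. expectation (\<lambda>x. \<Sum>j\<in>{1..3::nat}. \<Sum>g\<in>Ew e j. real (etaW e j g) * Y e j g x))"
        by (rule Bochner_Integration.integral_sum) (use Ij in auto)
      also have "\<dots> = (\<Sum>e<m. \<Sum>j\<in>{1..3::nat}. expectation (\<lambda>x. \<Sum>g\<in>Ew e j. real (etaW e j g) * Y e j g x))"
        by (intro sum.cong refl Bochner_Integration.integral_sum Ig) auto
      also have "\<dots> = (\<Sum>e<m. \<Sum>j\<in>{1..3::nat}. \<Sum>g\<in>Ew e j. expectation (\<lambda>x. real (etaW e j g) * Y e j g x))"
        by (intro sum.cong refl Bochner_Integration.integral_sum Bochner_Integration.integrable_mult_right IY) auto
      also have "\<dots> = (\<Sum>e<m. \<Sum>j\<in>{1..3::nat}. \<Sum>g\<in>Ew e j. real (etaW e j g) * (p * q))"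
        by (intro sum.cong refl) (simp add: EY)
      finally show ?thesis unfolding Zeq by simp
    qed
    also have "\<dots> = (1 / (3 * p * q)) * (A * (p * q))"
      unfolding A_def sum_distrib_right by (rule refl)
    finally show ?thesis using Asum pq by simp
  qed
  have Zb: "\<And>x. 0 \<le> Z x \<and> Z x \<le> C / (p * q)"
  proof -
    fix x
    have "(\<Sum>e<m. \<Sum>j\<in>{1..3::nat}. \<Sum>g\<in>Ew e j. real (etaW e j g) * Y e j g x) \<le> A"
      unfolding A_def
      by (intro sum_mono) (auto simp: Y_def)
    moreover have "0 \<le> (\<Sum>e<m. \<Sum>j\<in>{1..3::nat}. \<Sum>g\<in>Ew e j. real (etaW e j g) * Y e j g x)"
      by (intro sum_nonneg) (auto simp: Y_def)
    ultimately show "0 \<le> Z x \<and> Z x \<le> C / (p * q)"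
      unfolding Zeq using pq Asum
      by (auto simp: field_simps intro!: mult_left_mono)
  qed
  have MZ[measurable]: "random_variable borel Z" using IZ by auto
  have IZ2: "integrable M (\<lambda>x. Z x ^ 2)"
    by (rule integrable_const_bound[where B="(C/(p*q))^2"]) (use Zb in \<open>auto intro!: power_mono\<close>)
  have Cp: "C > 0" using Cpos by (simp add: C_def)
  have cheb: "prob {x\<in>space M. \<bar>Z x - C\<bar> \<ge> \<epsilon> * C} \<le> variance Z / (\<epsilon> * C)\<^sup>2"
    using Chebyshev_inequality[OF MZ IZ2, of "\<epsilon> * C"] EZ eps Cp by simp
  have "variance Z = expectation (\<lambda>x. (Z x - C)^2)" using EZ by simp
  also have "\<dots> \<le> expectation (\<lambda>x. (C / (p * q) - 2 * C) * Z x + C^2)"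
  proof (rule integral_mono)
    show "integrable M (\<lambda>x. (Z x - C)^2)"
    proof (rule integrable_const_bound[where B="(C/(p*q) + C)^2"], rule AE_I2)
      fix x
      have h: "\<bar>Z x - C\<bar> \<le> C / (p * q) + C"
        using Zb[of x] Cp pq by (auto simp: abs_le_iff intro: add_increasing)
      have "(Z x - C)^2 = \<bar>Z x - C\<bar>^2" by simp
      also have "\<dots> \<le> (C / (p * q) + C)^2"
        by (rule power_mono[OF h]) simp
      finally show "norm ((Z x - C)^2) \<le> (C / (p * q) + C)^2" by simp
    qed simp
    show "integrable M (\<lambda>x. (C / (p * q) - 2 * C) * Z x + C^2)"
      using IZ by auto
    fix x
    have "Z x * Z x \<le> C / (p * q) * Z x" using Zb[of x] by (intro mult_right_mono) auto
    then show "(Z x - C)^2 \<le> (C / (p * q) - 2 * C) * Z x + C^2"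
      by (simp add: power2_eq_square algebra_simps)
  qed
  also have "\<dots> = (C / (p * q) - 2 * C) * C + C^2"
    using IZ EZ by (simp add: prob_space)
  finally have V: "variance Z \<le> (C / (p * q) - 2 * C) * C + C^2" .
  have "variance Z / (\<epsilon> * C)\<^sup>2 \<le> ((C / (p * q) - 2 * C) * C + C^2) / (\<epsilon> * C)\<^sup>2"
    using V eps Cp by (intro divide_right_mono) auto
  also have "\<dots> = (1 - p * q) / (p * q * \<epsilon>\<^sup>2)"
    using pq eps Cp by (simp add: field_simps power2_eq_square)
  finally show ?thesis using cheb by (simp add: Z_def C_def)
qed

end
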